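(* Let $\mathfrak{u}_s(1,1)=\{T\in M_2(\mathbb{C}): T=T^*,\ T^*I_{1,1}+I_{1,1}T=0\}$ and let $\mathbf{U}_{s+}(1,1)=\{M\in\mathbf{U}_s(1,1):\operatorname{Tr}(M)\geq 2\}$. Then $\exp(\mathfrak{u}_s(1,1))=\mathbf{U}_{s+}(1,1)$, where $\exp$ is the matrix exponential. Moreover, every element of $\exp(\mathfrak{u}_s(1,1))$ is equivalent (under $\sim$) to exactly one element of $G_+=\{M_t:t\geq 0\}$, where $M_t=\begin{pmatrix}\cosh t&\sinh t\\ \sinh t&\cosh t\end{pmatrix}$; i.e. $\exp(\mathfrak{u}_s(1,1))/\!\sim\;=G_+$.
   Context: $I_{1,1}=\mathrm{diag}\{1,-1\}$; $T^*$ is the conjugate transpose. $\mathbf{U}_s(1,1)=\{M\in\mathbf{GL}(2,\mathbb{C}): M=M^*,\ M^*I_{1,1}M=I_{1,1}\}$. The equivalence $\sim$ on $2\times 2$ matrices in $\mathbf{U}(1,1)=\{M: M^*I_{1,1}M=I_{1,1}\}$ is the one defined by: $M_1\sim M_2$ if $M_1=\pm M_2$ or $M_1=Q^*M_2Q$ for some $Q\in\mathbf{U}(1)\oplus\mathbf{U}(1)$ (diagonal matrices with unimodular diagonal entries), taken as the equivalence relation these relations generate. *)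

theory Defs
  imports "HOL-Analysis.Analysis"
begin

type_synonym cmat2 = "complex^2^2"

definition adj :: "cmat2 \<Rightarrow> cmat2" where
  "adj A = (\<chi> i j. cnj (A $ j $ i))"

definition I11 :: cmat2 where
  "I11 = (\<chi> i j. if i = j then (if i = 1 then 1 else -1) else 0)"

primrec mpow :: "cmat2 \<Rightarrow> nat \<Rightarrow> cmat2" where
  "mpow A 0 = mat 1"
| "mpow A (Suc k) = A ** mpow A k"

definition mexp :: "cmat2 \<Rightarrow> cmat2" where
  "mexp T = (\<chi> i j. \<Sum>k. mpow T k $ i $ j / of_nat (fact k))"

definition U11 :: "cmat2 set" where
  "U11 = {M. adj M ** I11 ** M = I11}"

definition Us11 :: "cmat2 set" where
  "Us11 = {M. invertible M \<and> M = adj M \<and> adj M ** I11 ** M = I11}"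

definition us11 :: "cmat2 set" where
  "us11 = {T. T = adj T \<and> adj T ** I11 + I11 ** T = 0}"

definition Usp11 :: "cmat2 set" where
  "Usp11 = {M \<in> Us11. trace M \<in> \<real> \<and> Re (trace M) \<ge> 2}"

definition diagU :: "cmat2 set" where
  "diagU = {Q. \<exists>a b. cmod a = 1 \<and> cmod b = 1 \<and>
                 Q = (\<chi> i j. if i = j then (if i = 1 then a else b) else 0)}"

definition sim_basic :: "cmat2 \<Rightarrow> cmat2 \<Rightarrow> bool" where
  "sim_basic M1 M2 \<longleftrightarrow> M1 \<in> U11 \<and> M2 \<in> U11 \<and>
     (M1 = M2 \<or> M1 = - M2 \<or> (\<exists>Q\<in>diagU. M1 = adj Q ** M2 ** Q))"

definition sim :: "cmat2 \<Rightarrow> cmat2 \<Rightarrow> bool" where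
  "sim = equivclp sim_basic"

definition Mt :: "real \<Rightarrow> cmat2" where
  "Mt t = (\<chi> i j. if i = j then complex_of_real (cosh t) else complex_of_real (sinh t))"

definition Gplus :: "cmat2 set" where
  "Gplus = {Mt t | t. t \<ge> 0}"

end

theory Submission
  imports Defs
begin

definition mk :: "complex \<Rightarrow> complex \<Rightarrow> complex \<Rightarrow> complex \<Rightarrow> cmat2" where
  "mk a b c d = (\<chi> i j. if i = 1 then (if j = 1 then a else b) else (if j = 1 then c else d))"

lemma two_ne: "(2::2) \<noteq> 1" by simp

lemma mk_entries[simp]: "mk a b c d $ 1 $ 1 = a" "mk a b c d $ 1 $ 2 = b"
  "mk a b c d $ 2 $ 1 = c" "mk a b c d $ 2 $ 2 = d"
  by (simp_all add: mk_def)

lemma mk_eta: "A = mk (A$1$1) (A$1$2) (A$2$1) (A$2$2)"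
  by (simp add: vec_eq_iff forall_2)

lemma mk_eq[simp]: "mk a b c d = mk a' b' c' d' \<longleftrightarrow> a = a' \<and> b = b' \<and> c = c' \<and> d = d'"
  by (auto simp: vec_eq_iff forall_2)

lemma mk_mult[simp]: "mk a b c d ** mk e f g h = mk (a*e+b*g) (a*f+b*h) (c*e+d*g) (c*f+d*h)"
  by (simp add: vec_eq_iff forall_2 matrix_matrix_mult_def sum_2)

lemma mk_adj[simp]: "adj (mk a b c d) = mk (cnj a) (cnj c) (cnj b) (cnj d)"
  by (simp add: vec_eq_iff forall_2 adj_def)

lemma I11_mk: "I11 = mk 1 0 0 (-1)"
  by (simp add: vec_eq_iff forall_2 I11_def)

lemma mat1_mk: "mat 1 = mk 1 0 0 1"
  by (simp add: vec_eq_iff forall_2 mat_def)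

lemma zero_mk: "0 = mk 0 0 0 0"
  by (simp add: vec_eq_iff forall_2)

lemma mk_add[simp]: "mk a b c d + mk e f g h = mk (a+e) (b+f) (c+g) (d+h)"
  by (simp add: vec_eq_iff forall_2)

lemma mk_uminus[simp]: "- mk a b c d = mk (-a) (-b) (-c) (-d)"
  by (simp add: vec_eq_iff forall_2)

lemma mk_trace[simp]: "trace (mk a b c d) = a + d"
  by (simp add: trace_def sum_2)

lemma mk_det[simp]: "det (mk a b c d) = a * d - b * c"
  by (simp add: det_2)

lemma Mt_mk: "Mt t = mk (cosh t) (sinh t) (sinh t) (cosh t)"
  by (simp add: vec_eq_iff forall_2 Mt_def)

lemma diagU_mk: "diagU = {mk a 0 0 b | a b. cmod a = 1 \<and> cmod b = 1}"
  by (auto simp: diagU_def vec_eq_iff forall_2 mk_def)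

definition Tb :: "complex \<Rightarrow> cmat2" where "Tb b = mk 0 b (cnj b) 0"

lemma us11_Tb: "us11 = range Tb"
proof -
  have "T \<in> us11 \<longleftrightarrow> T \<in> range Tb" for T
  proof -
    obtain a b c d where T: "T = mk a b c d" using mk_eta by blast
    have 1: "T \<in> us11 \<longleftrightarrow> (a = cnj a \<and> b = cnj c \<and> c = cnj b \<and> d = cnj d) \<and>
        (cnj a * 1 + cnj c * 0 + (1 * a + 0 * c) = 0 \<and> cnj a * 0 + cnj c * - 1 + (1 * b + 0 * d) = 0 \<and>
         cnj b * 1 + cnj d * 0 + (0 * a + - 1 * c) = 0 \<and> cnj b * 0 + cnj d * - 1 + (0 * b + - 1 * d) = 0)"
      unfolding us11_def mem_Collect_eq T mk_adj I11_mk mk_mult mk_add zero_mk mk_eq ..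
    have 2: "T \<in> us11 \<longleftrightarrow> a = 0 \<and> d = 0 \<and> c = cnj b"
    proof
      assume "T \<in> us11"
      hence h: "a = cnj a" "c = cnj b" "d = cnj d" and
        E1: "cnj a * 1 + cnj c * 0 + (1 * a + 0 * c) = 0" and
        E4: "cnj b * 0 + cnj d * - 1 + (0 * b + - 1 * d) = 0" unfolding 1 by blast+
      have "cnj a + a = 0" using E1 by (simp only: mult_1_right mult_zero_right mult_1_left mult_zero_left add_0_right add_0_left)
      hence "a + a = 0" using h(1) by metis
      moreover have "- cnj d - d = 0" using E4 by simp
      hence "d + d = 0" using h(3) by (metis add.inverse_unique add.commute neg_equal_iff_equal diff_conv_add_uminus add.right_inverse)
      ultimately show "a = 0 \<and> d = 0 \<and> c = cnj b" using h(2) by simp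
    next
      assume A: "a = 0 \<and> d = 0 \<and> c = cnj b"
      show "T \<in> us11" unfolding 1 using A by simp
    qed
    show ?thesis unfolding 2 by (auto simp: T Tb_def)
  qed
  thus ?thesis by blast
qed


lemma bcnj: "b * cnj b = complex_of_real (cmod b) * complex_of_real (cmod b)" "cnj b * b = complex_of_real (cmod b) * complex_of_real (cmod b)"
  using complex_norm_square[of b] by (simp_all add: mult.commute power2_eq_square)

lemma mpow_Tb: "mpow (Tb b) k = (if even k then mk (of_real (cmod b ^ k)) 0 0 (of_real (cmod b ^ k))
   else mk 0 (of_real (cmod b ^ (k-1)) * b) (of_real (cmod b ^ (k-1)) * cnj b) 0)"
proof (induction k)
  case 0
  then show ?case by (simp add: mat1_mk)
next
  case (Suc k)
  show ?case
  proof (cases "even k")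
    case True
    then show ?thesis using Suc by (simp add: Tb_def mult.commute)
  next
    case False
    then obtain m where k: "k = Suc (2*m)" by (metis oddE Suc_eq_plus1)
    have "complex_of_real (cmod b ^ (2*m)) * (b * cnj b) = of_real (cmod b ^ Suc k)"
      by (simp add: bcnj k power_add power_mult[symmetric] mult.commute power2_eq_square)
    then show ?thesis using Suc False by (simp add: Tb_def k algebra_simps bcnj)
  qed
qed

lemma sum_diag: "(\<lambda>k. (if even k then complex_of_real (r ^ k) else 0) / of_nat (fact k)) sums of_real (cosh r)"
proof -
  have "(\<lambda>k. complex_of_real (if even k then r ^ k /\<^sub>R fact k else 0)) sums of_real (cosh r)"
    using cosh_converges[of r] by (simp only: sums_of_real_iff)
  moreover have eq: "\<And>k. (if even k then complex_of_real (r ^ k) else 0) / of_nat (fact k) = complex_of_real (if even k then r ^ k /\<^sub>R fact k else 0)"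
    by (simp add: divide_inverse scaleR_conv_of_real mult.commute)
  ultimately show ?thesis unfolding eq by simp
qed

lemma sum_off: "(\<lambda>k. (if even k then 0 else complex_of_real (cmod b ^ (k-1)) * b) / of_nat (fact k))
   sums (b * of_real (sinh (cmod b) / cmod b))"
proof (cases "b = 0")
  case True
  have "(\<lambda>k::nat. (if even k then 0 else complex_of_real (cmod b ^ (k-1)) * b) / of_nat (fact k)) = (\<lambda>k. 0)"
    using True by auto
  then show ?thesis using True by simp
next
  case False
  let ?r = "cmod b"
  have r: "?r \<noteq> 0" using False by simp
  have "(\<lambda>k. complex_of_real (if even k then 0 else ?r ^ k /\<^sub>R fact k)) sums of_real (sinh ?r)"
    using sinh_converges[of ?r] by (simp only: sums_of_real_iff)
  hence "(\<lambda>k. (b / of_real ?r) * complex_of_real (if even k then 0 else ?r ^ k /\<^sub>R fact k)) sums ((b / of_real ?r) * of_real (sinh ?r))"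
    by (rule sums_mult)
  moreover have "(b / of_real ?r) * complex_of_real (if even k then 0 else ?r ^ k /\<^sub>R fact k)
     = (if even k then 0 else complex_of_real (cmod b ^ (k-1)) * b) / of_nat (fact k)" for k
  proof (cases "even k")
    case False
    then obtain m where k: "k = Suc m" by (cases k) auto
    show ?thesis using False r by (simp add: k field_simps)
  qed simp
  moreover have "(b / of_real ?r) * of_real (sinh ?r) = b * of_real (sinh (cmod b) / cmod b)"
    by (simp add: divide_inverse)
  ultimately show ?thesis by simp
qed

lemma mpow_Tb_entries:
  "mpow (Tb b) k $ 1 $ 1 = (if even k then complex_of_real (cmod b ^ k) else 0)"
  "mpow (Tb b) k $ 2 $ 2 = (if even k then complex_of_real (cmod b ^ k) else 0)"
  "mpow (Tb b) k $ 1 $ 2 = (if even k then 0 else complex_of_real (cmod b ^ (k-1)) * b)"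
  "mpow (Tb b) k $ 2 $ 1 = (if even k then 0 else complex_of_real (cmod b ^ (k-1)) * cnj b)"
  by (simp_all add: mpow_Tb)

lemma mexp_Tb: "mexp (Tb b) = mk (of_real (cosh (cmod b))) (b * of_real (sinh (cmod b) / cmod b))
   (cnj b * of_real (sinh (cmod b) / cmod b)) (of_real (cosh (cmod b)))"
proof -
  have off2: "(\<lambda>k. (if even k then 0 else complex_of_real (cmod b ^ (k-1)) * cnj b) / of_nat (fact k))
   sums (cnj b * of_real (sinh (cmod b) / cmod b))"
    using sum_off[of "cnj b", unfolded complex_mod_cnj] by simp
  have e: "mexp (Tb b) $ i $ j = (\<Sum>k. mpow (Tb b) k $ i $ j / of_nat (fact k))" for i j
    by (simp add: mexp_def)
  show ?thesis
    apply (subst mk_eta)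
    unfolding e mpow_Tb_entries
    using sums_unique[OF sum_diag[of "cmod b"]] sums_unique[OF sum_off[of b]] sums_unique[OF off2]
    by simp
qed


lemma form_in_Usp11:
  fixes \<alpha> :: real
  assumes "\<alpha>^2 - cmod c ^ 2 = 1" "\<alpha> \<ge> 1"
  shows "mk (of_real \<alpha>) c (cnj c) (of_real \<alpha>) \<in> Usp11"
proof -
  have h0: "complex_of_real (\<alpha>*\<alpha> - cmod c * cmod c) = 1" using assms by (simp add: power2_eq_square)
  have h: "complex_of_real \<alpha> * of_real \<alpha> - of_real (cmod c) * of_real (cmod c) = 1"
    using h0 by (simp only: of_real_diff of_real_mult)
  have h': "complex_of_real \<alpha> * of_real \<alpha> - c * cnj c = 1" using h by (simp add: bcnj)
  have inv: "invertible (mk (of_real \<alpha>) c (cnj c) (of_real \<alpha>))"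
    by (simp add: invertible_det_nz h')
  show ?thesis unfolding Usp11_def Us11_def
    using inv h' assms(2) by (simp add: I11_mk bcnj algebra_simps)
qed

lemma cmod_off: "cmod (b * complex_of_real (sinh (cmod b) / cmod b)) = sinh (cmod b)"
proof (cases "b = 0")
  case False
  hence r: "cmod b > 0" by simp
  have "cmod (b * complex_of_real (sinh (cmod b) / cmod b)) = cmod b * abs (sinh (cmod b) / cmod b)"
    by (simp only: norm_mult norm_of_real)
  also have "\<dots> = sinh (cmod b)" using r by simp
  finally show ?thesis .
qed simp

lemma mexp_Tb_in: "mexp (Tb b) \<in> Usp11"
proof -
  have "(cosh (cmod b))^2 - cmod (b * complex_of_real (sinh (cmod b) / cmod b)) ^ 2 = 1"
    unfolding cmod_off by (simp add: hyperbolic_pythagoras)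
  from form_in_Usp11[OF this cosh_real_ge_1] show ?thesis
    by (simp add: mexp_Tb)
qed

lemma herm_real: "z = cnj z \<Longrightarrow> z = complex_of_real (Re z)"
  by (simp add: complex_eq_iff)

lemma Usp11_form:
  assumes "M \<in> Usp11"
  shows "\<exists>\<alpha> c. M = mk (complex_of_real \<alpha>) c (cnj c) (complex_of_real \<alpha>) \<and> \<alpha> \<ge> 1 \<and> \<alpha>^2 = 1 + cmod c ^ 2"
proof -
  obtain p q u v where M: "M = mk p q u v" using mk_eta by blast
  have herm: "M = adj M" and prod: "adj M ** I11 ** M = I11" and tr: "Re (trace M) \<ge> 2"
    using assms by (auto simp: Usp11_def Us11_def)
  have H: "p = cnj p \<and> q = cnj u \<and> u = cnj q \<and> v = cnj v" using herm unfolding M mk_adj mk_eq .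
  hence hp: "p = cnj p" and hu: "u = cnj q" and hv: "v = cnj v" by blast+
  define \<alpha> where "\<alpha> = Re p"
  define \<delta> where "\<delta> = Re v"
  have p: "p = of_real \<alpha>" using herm_real[OF hp] \<alpha>_def by simp
  have v: "v = of_real \<delta>" using herm_real[OF hv] \<delta>_def by simp
  have prod': "mk (cnj p) q (cnj q) (cnj v) ** mk 1 0 0 (-1) ** mk p q (cnj q) v = mk 1 0 0 (-1)"
    using prod by (simp only: M hu mk_adj I11_mk complex_cnj_cnj)
  from prod' have e1: "p * p - q * cnj q = 1" and e2: "p * q - q * v = 0" and e3: "cnj q * q - v * v = -1"
    by (simp_all add: hp[symmetric] hv[symmetric] algebra_simps)
  have r1: "\<alpha> * \<alpha> - cmod q * cmod q = 1"
    using arg_cong[OF e1, of Re] by (simp add: p bcnj)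
  have r3: "\<delta> * \<delta> - cmod q * cmod q = 1"
    using arg_cong[OF e3, of Re] by (simp add: v bcnj)
  have r2: "q * (of_real (\<alpha> - \<delta>)) = 0" using e2 by (simp add: p v algebra_simps)
  have t: "\<alpha> + \<delta> \<ge> 2" using tr by (simp add: M p v)
  have ad: "\<alpha> = \<delta>"
  proof (cases "q = 0")
    case True
    hence "\<alpha> * \<alpha> = 1" "\<delta> * \<delta> = 1" using r1 r3 by auto
    hence "\<alpha> = 1 \<or> \<alpha> = -1" "\<delta> = 1 \<or> \<delta> = -1"
      by (simp_all add: square_eq_1_iff)
    thus ?thesis using t by auto
  next
    case False
    thus ?thesis using r2 by simp
  qed
  have a1: "\<alpha> \<ge> 1" using t ad by simp
  show ?thesis
  proof (intro exI[of _ \<alpha>] exI[of _ q] conjI)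
    show "\<alpha>^2 = 1 + cmod q ^ 2" using r1 by (simp add: power2_eq_square)
  qed (simp_all add: M p v hu ad[symmetric] a1)
qed


lemma form_in_image:
  fixes \<alpha> :: real
  assumes a1: "\<alpha> \<ge> 1" and a2: "\<alpha>^2 = 1 + cmod c ^ 2"
  shows "mk (complex_of_real \<alpha>) c (cnj c) (complex_of_real \<alpha>) = mexp (Tb (if c = 0 then 0 else c * of_real (arsinh (cmod c) / cmod c)))"
proof (cases "c = 0")
  case True
  hence "\<alpha> * \<alpha> = 1" using a2 by (simp add: power2_eq_square)
  hence "\<alpha> = 1" using a1 by (simp add: square_eq_1_iff)
  then show ?thesis using True by (simp add: mexp_Tb)
next
  case False
  define r where "r = arsinh (cmod c)"
  have sr: "sinh r = cmod c" by (simp add: r_def)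
  have r0: "r > 0" using False sr by (metis sinh_real_pos_iff zero_less_norm_iff)
  have cr: "cosh r = \<alpha>" using a1 a2 by (simp add: r_def cosh_arsinh_real real_sqrt_unique add.commute)
  define b where "b = c * of_real (r / cmod c)"
  have "cmod b = cmod c * abs (r / cmod c)" by (simp only: b_def norm_mult norm_of_real)
  hence cb: "cmod b = r" using r0 False by simp
  have bs: "b * of_real (sinh r / r) = c" using r0 False sr by (simp add: b_def)
  have e: "(if c = 0 then 0 else c * of_real (arsinh (cmod c) / cmod c)) = b"
    by (simp only: if_not_P[OF False] b_def r_def)
  have bs': "cnj b * of_real (sinh r / r) = cnj c" by (metis bs complex_cnj_mult complex_cnj_complex_of_real)
  show ?thesis unfolding e mexp_Tb cb bs bs' cr ..
qed

lemma image_eq: "mexp ` us11 = Usp11"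
proof
  show "mexp ` us11 \<subseteq> Usp11" using mexp_Tb_in by (auto simp: us11_Tb)
next
  show "Usp11 \<subseteq> mexp ` us11"
  proof
    fix M assume "M \<in> Usp11"
    then obtain \<alpha> c where M: "M = mk (complex_of_real \<alpha>) c (cnj c) (complex_of_real \<alpha>)"
      and "\<alpha> \<ge> 1" "\<alpha>^2 = 1 + cmod c ^ 2" using Usp11_form by blast
    then show "M \<in> mexp ` us11" using form_in_image by (auto simp: us11_Tb)
  qed
qed

lemma Mt_image: "t \<ge> 0 \<Longrightarrow> Mt t = mexp (Tb (of_real t))"
  by (cases "t = 0") (simp_all add: mexp_Tb Mt_mk)

lemma Usp11_U11: "Usp11 \<subseteq> U11"
  by (auto simp: Usp11_def Us11_def U11_def)

lemma trace_conj: "Q \<in> diagU \<Longrightarrow> trace (adj Q ** N ** Q) = trace N"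
proof -
  assume "Q \<in> diagU"
  then obtain a d where Q: "Q = mk a 0 0 d" "cmod a = 1" "cmod d = 1" by (auto simp: diagU_mk)
  obtain p q u v where N: "N = mk p q u v" using mk_eta by blast
  have "cnj a * a = 1" "cnj d * d = 1" using Q bcnj[of a] bcnj[of d] by simp_all
  hence h: "cnj a * p * a = p" "cnj d * v * d = v"
    by (metis mult.commute mult.left_commute mult_1_right)+
  have "trace (adj Q ** N ** Q) = cnj a * p * a + cnj d * v * d" by (simp add: Q N)
  also have "\<dots> = trace N" by (simp only: h N mk_trace)
  finally show ?thesis .
qed

lemma trace_uminus[simp]: "trace (- A) = - trace (A::cmat2)"
  by (simp add: trace_def sum_negf)

lemma sim_inv: "sim M N \<Longrightarrow> cmod (trace M) = cmod (trace N)"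
  unfolding sim_def
proof (induction rule: equivclp_induct)
  case base
  then show ?case by simp
next
  case (step y z)
  have "cmod (trace y) = cmod (trace z)" if "sim_basic y z" for y z
    using that trace_conj[of _ z] by (auto simp: sim_basic_def)
  then show ?case using step by metis
qed

theorem corollary4p2:
  shows "mexp ` us11 = Usp11 \<and>
         (\<forall>M \<in> mexp ` us11. \<exists>!N. N \<in> Gplus \<and> sim M N)"
proof (intro conjI ballI)
  show "mexp ` us11 = Usp11" by (rule image_eq)
next
  fix M assume "M \<in> mexp ` us11"
  then obtain b where M: "M = mexp (Tb b)" by (auto simp: us11_Tb)
  define r where "r = cmod b"
  have r0: "r \<ge> 0" by (simp add: r_def)
  have MU: "M \<in> U11" using M mexp_Tb_in Usp11_U11 by blast
  have NU: "Mt r \<in> U11" using Mt_image[OF r0] mexp_Tb_in Usp11_U11 by auto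
  have ex: "sim M (Mt r)"
  proof (cases "b = 0")
    case True
    hence "M = Mt r" by (simp add: M r_def Mt_image)
    thus ?thesis by (simp add: sim_def)
  next
    case False
    hence rp: "r > 0" by (simp add: r_def)
    define q where "q = cnj b / of_real r"
    have q1: "cmod q = 1" using rp by (simp add: q_def norm_divide r_def)
    have Qd: "mk q 0 0 1 \<in> diagU" using q1 by (auto simp: diagU_mk)
    have qq: "cnj q * q = 1" using q1 bcnj[of q] by simp
    have dd: "b * (cnj b * X) / (of_real r * of_real r) = X" for X
    proof -
      have h: "b * (cnj b * X) = (of_real r * of_real r) * X" by (metis mult.assoc r_def bcnj(1))
      show ?thesis unfolding h using rp by simp
    qed
    have "adj (mk q 0 0 1) ** Mt r ** mk q 0 0 1 = M"
      using qq rp by (simp add: dd Mt_mk M mexp_Tb r_def[symmetric] q_def mult.commute mult.left_commute)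
    hence "sim_basic M (Mt r)" using Qd MU NU unfolding sim_basic_def by metis
    thus ?thesis by (simp add: sim_def r_into_equivclp)
  qed
  show "\<exists>!N. N \<in> Gplus \<and> sim M N"
  proof (rule ex1I[of _ "Mt r"])
    show "Mt r \<in> Gplus \<and> sim M (Mt r)" using ex r0 by (auto simp: Gplus_def)
  next
    fix N assume N: "N \<in> Gplus \<and> sim M N"
    then obtain t where t: "N = Mt t" "t \<ge> 0" by (auto simp: Gplus_def)
    have "sim N (Mt r)" using N ex unfolding sim_def by (meson equivclp_sym equivclp_trans)
    hence "cmod (trace N) = cmod (trace (Mt r))" by (rule sim_inv)
    hence "cmod (complex_of_real (2 * cosh t)) = cmod (complex_of_real (2 * cosh r))"
      by (simp add: t Mt_mk)
    hence "cosh t = cosh r" by simp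
    hence "t = r" using t r0 by simp
    thus "N = Mt r" using t by simp
  qed
qed

end
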